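(* Let $(\mathcal A,\mathcal B,\mathcal C)$ be a generic triple of flags in an $m$-dimensional $R$-vector space $V$. For integers $a,b,c\ge1$ with $a+b+c=m+2$, the space $\mathcal A^{a-1}\cap\mathcal B^{b-1}\cap\mathcal C^{c-1}$ is a line, and the compositions of its inclusion with the projections give isomorphisms onto $\mathrm{gr}^a\mathcal A$, $\mathrm{gr}^b\mathcal B$, $\mathrm{gr}^c\mathcal C$; composing the inverse of one of these with another yields canonical isomorphisms between any two of $\mathrm{gr}^a\mathcal A,\mathrm{gr}^b\mathcal B,\mathrm{gr}^c\mathcal C$. Then: (1) for any $a,b,c\ge1$ with $a+b+c=m+2$, the composition of the canonical isomorphisms $\mathrm{gr}^a\mathcal A\to\mathrm{gr}^b\mathcal B\to\mathrm{gr}^c\mathcal C\to\mathrm{gr}^a\mathcal A$ is the identity; (2) for any $a,b,c\ge2$ with $a+b+c=m+4$, the composition of the six canonical isomorphisms around the hexagon $$\mathrm{gr}^a\mathcal A\to\mathrm{gr}^{b-1}\mathcal B\to\mathrm{gr}^{c}\mathcal C\to\mathrm{gr}^{a-1}\mathcal A\to\mathrm{gr}^{b}\mathcal B\to\mathrm{gr}^{c-1}\mathcal C\to\mathrm{gr}^a\mathcal A$$ equals $-\mathrm{Id}$.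
   Context: $R$ is a skew field; vector spaces are free left $R$-modules. A flag $\mathcal F$ in $V$ is a filtration $V=\mathcal F^0\supset\dots\supset\mathcal F^m=0$ with $\operatorname{codim}\mathcal F^i=i$, and $\mathrm{gr}^i\mathcal F:=\mathcal F^{i-1}/\mathcal F^i$. A triple of flags is generic if $V\to V/\mathcal A^a\oplus V/\mathcal B^b\oplus V/\mathcal C^c$ is an isomorphism for all $a,b,c\ge0$ with $a+b+c=m$. *)

theory Defs
  imports "HOL-Analysis.Analysis"
begin

text \<open>The ambient space: the free left module R^m over a skew field R, realised as
  'r ^ 'n with 'r :: division_ring, m = CARD('n), and left scalar multiplication *s.\<close>

definition lsubspace :: "('r::division_ring ^ 'n) set \<Rightarrow> bool" where
  "lsubspace W \<longleftrightarrow> 0 \<in> W \<and> (\<forall>x\<in>W. \<forall>y\<in>W. x + y \<in> W) \<and> (\<forall>c. \<forall>x\<in>W. c *s x \<in> W)"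

definition lspan :: "('r::division_ring ^ 'n) set \<Rightarrow> ('r ^ 'n) set" where
  "lspan S = {\<Sum>x\<in>T. f x *s x | T f. finite T \<and> T \<subseteq> S}"

definition lindep_free :: "('r::division_ring ^ 'n) set \<Rightarrow> bool" where
  "lindep_free S \<longleftrightarrow> (\<forall>T f. finite T \<and> T \<subseteq> S \<and> (\<Sum>x\<in>T. f x *s x) = 0 \<longrightarrow> (\<forall>x\<in>T. f x = 0))"

definition lbasis :: "('r::division_ring ^ 'n) set \<Rightarrow> ('r ^ 'n) set \<Rightarrow> bool" where
  "lbasis W B \<longleftrightarrow> B \<subseteq> W \<and> lindep_free B \<and> lspan B = W"

definition ldim :: "('r::division_ring ^ 'n) set \<Rightarrow> nat" where
  "ldim W = card (SOME B. lbasis W B)"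

definition lcodim :: "('r::division_ring ^ 'n::finite) set \<Rightarrow> nat" where
  "lcodim W = CARD('n) - ldim W"

definition is_flag :: "(nat \<Rightarrow> ('r::division_ring ^ 'n::finite) set) \<Rightarrow> bool" where
  "is_flag F \<longleftrightarrow> F 0 = UNIV \<and> F CARD('n) = {0} \<and>
     (\<forall>i\<le>CARD('n). lsubspace (F i) \<and> lcodim (F i) = i) \<and>
     (\<forall>i<CARD('n). F (Suc i) \<subseteq> F i)"

definition coset :: "('r::division_ring ^ 'n) set \<Rightarrow> 'r ^ 'n \<Rightarrow> ('r ^ 'n) set" where
  "coset W x = (\<lambda>w. x + w) ` W"

definition quot :: "('r::division_ring ^ 'n) set \<Rightarrow> ('r ^ 'n) set \<Rightarrow> ('r ^ 'n) set set" where
  "quot U W = coset W ` U"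

definition gr :: "(nat \<Rightarrow> ('r::division_ring ^ 'n) set) \<Rightarrow> nat \<Rightarrow> ('r ^ 'n) set set" where
  "gr F i = quot (F (i - 1)) (F i)"

definition generic_triple ::
  "(nat \<Rightarrow> ('r::division_ring ^ 'n::finite) set) \<Rightarrow> (nat \<Rightarrow> ('r ^ 'n) set) \<Rightarrow> (nat \<Rightarrow> ('r ^ 'n) set) \<Rightarrow> bool" where
  "generic_triple A B C \<longleftrightarrow> is_flag A \<and> is_flag B \<and> is_flag C \<and>
     (\<forall>a b c. a + b + c = CARD('n) \<longrightarrow>
        bij_betw (\<lambda>v. (coset (A a) v, coset (B b) v, coset (C c) v)) UNIV
          (quot UNIV (A a) \<times> quot UNIV (B b) \<times> quot UNIV (C c)))"

definition tline ::
  "(nat \<Rightarrow> ('r::division_ring ^ 'n) set) \<Rightarrow> (nat \<Rightarrow> ('r ^ 'n) set) \<Rightarrow> (nat \<Rightarrow> ('r ^ 'n) set) \<Rightarrow>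
   nat \<Rightarrow> nat \<Rightarrow> nat \<Rightarrow> ('r ^ 'n) set" where
  "tline A B C a b c = A (a - 1) \<inter> B (b - 1) \<inter> C (c - 1)"

definition can_iso ::
  "('r::division_ring ^ 'n) set \<Rightarrow> (nat \<Rightarrow> ('r ^ 'n) set) \<Rightarrow> nat \<Rightarrow> (nat \<Rightarrow> ('r ^ 'n) set) \<Rightarrow> nat \<Rightarrow>
   ('r ^ 'n) set \<Rightarrow> ('r ^ 'n) set" where
  "can_iso L F i G j X = coset (G j) (THE l. l \<in> L \<and> coset (F i) l = X)"

end

theory Submission
  imports Defs
begin


definition fspan :: "('i \<Rightarrow> 'r::division_ring^'n) \<Rightarrow> 'i set \<Rightarrow> ('r^'n) set" where
  "fspan w J = {\<Sum>j\<in>J. f j *s w j | f. True}"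

definition findep :: "('i \<Rightarrow> 'r::division_ring^'n) \<Rightarrow> 'i set \<Rightarrow> bool" where
  "findep v I \<longleftrightarrow> (\<forall>g. (\<Sum>i\<in>I. g i *s v i) = 0 \<longrightarrow> (\<forall>i\<in>I. g i = 0))"

lemma smult_inv_cancel:
  fixes x :: "'r::division_ring^'n"
  assumes "c \<noteq> 0" shows "inverse c *s (c *s x) = x"
  using assms by (simp add: vector_smult_assoc)

lemma fspanI: "x = (\<Sum>j\<in>J. f j *s w j) \<Longrightarrow> x \<in> fspan w J"
  unfolding fspan_def by blast

lemma exchange:
  fixes w :: "'j \<Rightarrow> 'r::division_ring^'n" and v :: "'i \<Rightarrow> 'r^'n"
  assumes "finite J"
  shows "finite I \<Longrightarrow> findep v I \<Longrightarrow> (\<forall>i\<in>I. v i \<in> fspan w J) \<Longrightarrow> card I \<le> card J"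
  using assms
proof (induction J arbitrary: I v rule: finite_induct)
  case empty
  show ?case
  proof (rule ccontr)
    assume "\<not> card I \<le> card {}"
    then obtain i where i: "i \<in> I" by fastforce
    have "\<forall>i\<in>I. v i = 0" using empty.prems(3) by (auto simp: fspan_def)
    then have "(\<Sum>i\<in>I. (1::'r) *s v i) = 0" by simp
    then show False using empty.prems(2) i unfolding findep_def by fastforce
  qed
next
  case (insert j J)
  have "\<forall>i\<in>I. \<exists>f. v i = (\<Sum>k\<in>insert j J. f k *s w k)"
    using insert.prems(3) by (auto simp: fspan_def)
  then obtain F where F: "\<And>i. i\<in>I \<Longrightarrow> v i = (\<Sum>k\<in>insert j J. F i k *s w k)"
    by metis
  define z where "z i = (\<Sum>k\<in>J. F i k *s w k)" for i
  have vz: "v i = F i j *s w j + z i" if "i \<in> I" for i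
    using F[OF that] insert.hyps by (simp add: z_def)
  have zJ: "z i \<in> fspan w J" for i unfolding z_def by (rule fspanI) simp
  show ?case
  proof (cases "\<forall>i\<in>I. F i j = 0")
    case True
    then have "\<forall>i\<in>I. v i \<in> fspan w J" using vz zJ by simp
    then have "card I \<le> card J" using insert by blast
    then show ?thesis using insert.hyps by simp
  next
    case False
    then obtain i0 where i0: "i0 \<in> I" "F i0 j \<noteq> 0" by blast
    define c0 where "c0 = F i0 j"
    define d where "d i = F i j * inverse c0" for i
    define v' where "v' i = v i - d i *s v i0" for i
    define I' where "I' = I - {i0}"
    have dc: "d i * c0 = F i j" for i using i0 by (simp add: d_def c0_def mult.assoc)
    have "v' i = (\<Sum>k\<in>J. (F i k - d i * F i0 k) *s w k)" if "i \<in> I" for i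
    proof -
      have "v' i = F i j *s w j + z i - d i *s (c0 *s w j + z i0)"
        unfolding v'_def using vz[OF that] vz[OF i0(1)] by (simp add: c0_def)
      also have "\<dots> = z i - d i *s z i0"
        by (simp add: vector_add_ldistrib vector_smult_assoc dc)
      also have "\<dots> = (\<Sum>k\<in>J. (F i k - d i * F i0 k) *s w k)"
        by (simp add: z_def vector_sub_rdistrib sum_subtractf sum_cmul[symmetric] vector_smult_assoc)
      finally show ?thesis .
    qed
    note v'eq = this
    have v'J: "\<forall>i\<in>I'. v' i \<in> fspan w J"
    proof
      fix i assume "i \<in> I'"
      then have "v' i = (\<Sum>k\<in>J. (\<lambda>k. F i k - d i * F i0 k) k *s w k)"
        using v'eq unfolding I'_def by blast
      then show "v' i \<in> fspan w J" by (rule fspanI)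
    qed
    have fin': "finite I'" using insert.prems(1) by (simp add: I'_def)
    have ind': "findep v' I'"
      unfolding findep_def
    proof (intro allI impI)
      fix g assume g: "(\<Sum>i\<in>I'. g i *s v' i) = 0"
      define G where "G i = (if i = i0 then - (\<Sum>k\<in>I'. g k * d k) else g i)" for i
      have "(\<Sum>i\<in>I'. g i *s v' i) = (\<Sum>i\<in>I'. g i *s v i) - (\<Sum>k\<in>I'. g k * d k) *s v i0"
        by (simp add: v'_def vector_ssub_ldistrib sum_subtractf vector_smult_assoc
             vec_eq_iff sum_distrib_right)
      moreover have "(\<Sum>i\<in>I. G i *s v i) = G i0 *s v i0 + (\<Sum>i\<in>I'. G i *s v i)"
        using i0 insert.prems(1) unfolding I'_def by (simp add: sum.remove)
      moreover have "(\<Sum>i\<in>I'. G i *s v i) = (\<Sum>i\<in>I'. g i *s v i)"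
        by (rule sum.cong) (auto simp: G_def I'_def)
      ultimately have "(\<Sum>i\<in>I. G i *s v i) = 0"
        using g by (simp add: G_def vector_smult_lneg)
      then have "\<forall>i\<in>I. G i = 0" using insert.prems(2) unfolding findep_def by blast
      show "\<forall>i\<in>I'. g i = 0"
      proof
        fix i assume i: "i \<in> I'"
        then have "i \<in> I" "i \<noteq> i0" by (auto simp: I'_def)
        then show "g i = 0" using \<open>\<forall>i\<in>I. G i = 0\<close> by (auto simp: G_def)
      qed
    qed
    have "card I' \<le> card J" using insert.IH[OF fin' ind' v'J] .
    moreover have "card I = Suc (card I')" 
      using i0 insert.prems(1) unfolding I'_def by (metis card_Suc_Diff1)
    ultimately show ?thesis using insert.hyps by simp
  qed
qed


lemma sum_restrict_coeff:
  fixes f :: "'r::division_ring^'n \<Rightarrow> 'r"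
  assumes "finite S" "T \<subseteq> S"
  shows "(\<Sum>x\<in>S. (if x\<in>T then f x else 0) *s x) = (\<Sum>x\<in>T. f x *s x)"
proof -
  have "(\<Sum>x\<in>S. (if x\<in>T then f x else 0) *s x) = (\<Sum>x\<in>S. if x\<in>T then f x *s x else 0)"
    by (rule sum.cong) auto
  also have "\<dots> = (\<Sum>x\<in>S \<inter> T. f x *s x)" by (rule sum.inter_restrict[OF assms(1), symmetric])
  also have "S \<inter> T = T" using assms(2) by blast
  finally show ?thesis .
qed

lemma lspan_fin:
  fixes S :: "('r::division_ring^'n) set"
  assumes "finite S" shows "lspan S = fspan id S"
proof
  show "lspan S \<subseteq> fspan id S"
  proof
    fix y assume "y \<in> lspan S"
    then obtain T f where T: "finite T" "T \<subseteq> S" "y = (\<Sum>x\<in>T. f x *s x)"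
      unfolding lspan_def by blast
    then have "y = (\<Sum>x\<in>S. (\<lambda>x. if x\<in>T then f x else 0) x *s id x)"
      using sum_restrict_coeff[OF assms T(2)] by simp
    then show "y \<in> fspan id S" by (rule fspanI)
  qed
next
  show "fspan id S \<subseteq> lspan S"
    unfolding fspan_def lspan_def using assms by auto
qed

lemma lindep_fin:
  fixes S :: "('r::division_ring^'n) set"
  assumes "finite S" shows "lindep_free S \<longleftrightarrow> findep id S"
proof
  assume "lindep_free S" then show "findep id S"
    unfolding lindep_free_def findep_def using assms by auto
next
  assume H: "findep id S"
  show "lindep_free S" unfolding lindep_free_def
  proof (intro allI impI)
    fix T f assume A: "finite T \<and> T \<subseteq> S \<and> (\<Sum>x\<in>T. f x *s x) = 0"
    define h where "h = (\<lambda>x. if x\<in>T then f x else 0)"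
    have "(\<Sum>x\<in>S. h x *s id x) = 0"
      using sum_restrict_coeff[OF assms] A unfolding h_def by simp
    then have "\<forall>x\<in>S. h x = 0" using H unfolding findep_def by blast
    then have "\<forall>x\<in>S. (if x\<in>T then f x else 0) = 0" unfolding h_def by simp
    then show "\<forall>x\<in>T. f x = 0" using A by (metis subsetD)
  qed
qed

lemma lindep_subset: "lindep_free S \<Longrightarrow> T \<subseteq> S \<Longrightarrow> lindep_free T"
  unfolding lindep_free_def by blast

lemma span_axis: "fspan (\<lambda>i. axis i (1::'r::division_ring)) (UNIV::'n::finite set) = UNIV"
proof -
  have "x \<in> fspan (\<lambda>i. axis i (1::'r)) (UNIV::'n set)" for x :: "'r^'n"
    by (rule fspanI[OF basis_expansion[symmetric]])
  then show ?thesis by blast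
qed

lemma indep_card_fin:
  fixes S :: "('r::division_ring^'n::finite) set"
  assumes "lindep_free S" "finite S" shows "card S \<le> CARD('n)"
proof -
  have "findep id S" using assms lindep_fin by blast
  then show ?thesis
    using exchange[of "UNIV::'n set" S id "\<lambda>i. axis i (1::'r)"] assms span_axis by auto
qed

lemma indep_card:
  fixes S :: "('r::division_ring^'n::finite) set"
  assumes "lindep_free S" shows "finite S \<and> card S \<le> CARD('n)"
proof (cases "finite S")
  case True then show ?thesis using indep_card_fin assms by blast
next
  case False
  then obtain T where T: "finite T" "card T = Suc CARD('n)" "T \<subseteq> S"
    using infinite_arbitrarily_large by blast
  then have "card T \<le> CARD('n)" using indep_card_fin lindep_subset assms by blast
  then show ?thesis using T by simp
qed

lemma sum_closed:
  assumes "lsubspace W" "\<forall>x\<in>T. g x \<in> W" shows "sum g T \<in> W"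
proof (cases "finite T")
  case True
  then show ?thesis using assms(2)
    by (induction T rule: finite_induct) (use assms(1) in \<open>auto simp: lsubspace_def\<close>)
next
  case False then show ?thesis using assms(1) by (simp add: lsubspace_def)
qed

lemma lspan_sub: "lsubspace W \<Longrightarrow> S \<subseteq> W \<Longrightarrow> lspan S \<subseteq> W"
  unfolding lspan_def
  by (auto intro!: sum_closed) (auto simp: lsubspace_def)

lemma lspan_superset: "S \<subseteq> lspan (S::('r::division_ring^'n) set)"
proof
  fix x assume "x \<in> S"
  show "x \<in> lspan S" unfolding lspan_def
    apply (rule CollectI) apply (rule exI[of _ "{x}"]) apply (rule exI[of _ "\<lambda>_. (1::'r)"])
    using \<open>x\<in>S\<close> by simp
qed

lemma indep_insert:
  fixes S :: "('r::division_ring^'n) set"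
  assumes "finite S" "lindep_free S" "x \<notin> lspan S"
  shows "lindep_free (insert x S)"
proof -
  have xS: "x \<notin> S" using assms(3) lspan_superset by blast
  have "findep id (insert x S)" unfolding findep_def
  proof (intro allI impI)
    fix g assume g: "(\<Sum>i\<in>insert x S. g i *s id i) = 0"
    then have g2: "g x *s x + (\<Sum>i\<in>S. g i *s i) = 0" using xS assms(1) by simp
    have gx: "g x = 0"
    proof (rule ccontr)
      assume ne: "g x \<noteq> 0"
      have "g x *s x = - (\<Sum>i\<in>S. g i *s i)" using g2 by (simp add: eq_neg_iff_add_eq_0)
      then have "x = inverse (g x) *s (- (\<Sum>i\<in>S. g i *s i))"
        using smult_inv_cancel[OF ne, of x] by simp
      also have "\<dots> = (\<Sum>i\<in>S. (\<lambda>i. - (inverse (g x) * g i)) i *s id i)"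
        by (simp add: vector_smult_rneg sum_cmul[symmetric] vector_smult_assoc
             vector_smult_lneg sum_negf)
      finally have "x \<in> fspan id S" by (rule fspanI)
      then show False using assms(3) lspan_fin[OF assms(1)] by simp
    qed
    then have "(\<Sum>i\<in>S. g i *s id i) = 0" using g2 by simp
    then have "\<forall>i\<in>S. g i = 0" using assms(2) lindep_fin[OF assms(1)] unfolding findep_def by blast
    then show "\<forall>i\<in>insert x S. g i = 0" using gx by simp
  qed
  then show ?thesis using lindep_fin assms(1) by blast
qed




lemma basis_exists:
  fixes W :: "('r::division_ring^'n::finite) set"
  assumes W: "lsubspace W" shows "\<exists>B. lbasis W B \<and> finite B"
proof -
  let ?P = "\<lambda>k. \<exists>S. S \<subseteq> W \<and> lindep_free S \<and> card S = k"
  have P0: "?P 0" by (rule exI[of _ "{}"]) (simp add: lindep_free_def)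
  have bd: "\<forall>k. ?P k \<longrightarrow> k \<le> CARD('n)" using indep_card by blast
  obtain k where k: "?P k" "\<forall>y. ?P y \<longrightarrow> y \<le> k"
    using Nat.ex_has_greatest_nat[OF P0 bd] by blast
  then obtain S where S: "S \<subseteq> W" "lindep_free S" "card S = k" by blast
  have fin: "finite S" using S indep_card by blast
  have "W \<subseteq> lspan S"
  proof
    fix x assume x: "x \<in> W"
    show "x \<in> lspan S"
    proof (rule ccontr)
      assume nx: "x \<notin> lspan S"
      then have "x \<notin> S" using lspan_superset by blast
      have "lindep_free (insert x S)" using indep_insert[OF fin S(2) nx] .
      moreover have "insert x S \<subseteq> W" using x S by blast
      ultimately have "card (insert x S) \<le> k" using k(2) by blast
      then show False using \<open>x \<notin> S\<close> fin S(3) by simp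
    qed
  qed
  then have "lspan S = W" using lspan_sub[OF W S(1)] by blast
  then show ?thesis using S fin unfolding lbasis_def by blast
qed

lemma card_le_basis:
  fixes B :: "('r::division_ring^'n::finite) set"
  assumes "lbasis W B" "S \<subseteq> W" "lindep_free S"
  shows "card S \<le> card B"
proof -
  have fB: "finite B" using assms(1) indep_card unfolding lbasis_def by blast
  have fS: "finite S" using assms(3) indep_card by blast
  have "\<forall>i\<in>S. id i \<in> fspan id B" using assms lspan_fin[OF fB] unfolding lbasis_def by auto
  then show ?thesis using exchange[OF fB fS, of id id] lindep_fin[OF fS] assms(3) by blast
qed

lemma ldim_basis:
  fixes B :: "('r::division_ring^'n::finite) set"
  assumes "lbasis W B" shows "ldim W = card B"
proof -
  have B0: "lbasis W (SOME B. lbasis W B)" using assms by (rule someI)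
  have "card B \<le> card (SOME B. lbasis W B)"
    using card_le_basis[OF B0] assms unfolding lbasis_def by blast
  moreover have "card (SOME B. lbasis W B) \<le> card B"
    using card_le_basis[OF assms] B0 unfolding lbasis_def by blast
  ultimately show ?thesis unfolding ldim_def by simp
qed

lemma ldim_indep:
  fixes W :: "('r::division_ring^'n::finite) set"
  assumes "lsubspace W" "S \<subseteq> W" "lindep_free S"
  shows "card S \<le> ldim W"
  using basis_exists[OF assms(1)] card_le_basis assms ldim_basis by metis

lemma ldim_le:
  fixes W :: "('r::division_ring^'n::finite) set"
  assumes "lsubspace W" shows "ldim W \<le> CARD('n)"
  using basis_exists[OF assms(1)] indep_card ldim_basis unfolding lbasis_def by metis

lemma flag_ldim:
  fixes F :: "nat \<Rightarrow> ('r::division_ring^'n::finite) set"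
  assumes "is_flag F" "i \<le> CARD('n)"
  shows "ldim (F i) = CARD('n) - i"
proof -
  have "lsubspace (F i)" "lcodim (F i) = i" using assms unfolding is_flag_def by auto
  then show ?thesis using ldim_le[of "F i"] unfolding lcodim_def by simp
qed

lemma flag_sub:
  fixes F :: "nat \<Rightarrow> ('r::division_ring^'n::finite) set"
  shows "is_flag F \<Longrightarrow> i \<le> CARD('n) \<Longrightarrow> lsubspace (F i)"
  unfolding is_flag_def by auto

lemma flag_mono:
  fixes F :: "nat \<Rightarrow> ('r::division_ring^'n::finite) set"
  assumes "is_flag F" "i \<le> j" "j \<le> CARD('n)"
  shows "F j \<subseteq> F i"
  using assms(2,3)
proof (induction j)
  case 0 then show ?case by simp
next
  case (Suc j)
  show ?case
  proof (cases "i = Suc j")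
    case True then show ?thesis by simp
  next
    case False
    then have "F j \<subseteq> F i" using Suc by simp
    moreover have "F (Suc j) \<subseteq> F j" using assms(1) Suc.prems unfolding is_flag_def by auto
    ultimately show ?thesis by blast
  qed
qed

lemma flag_ne:
  fixes F :: "nat \<Rightarrow> ('r::division_ring^'n::finite) set"
  assumes "is_flag F" "i < j" "j \<le> CARD('n)"
  shows "F j \<noteq> F i"
proof
  assume "F j = F i"
  then have "lcodim (F j) = lcodim (F i)" by simp
  then show False using assms unfolding is_flag_def by auto
qed




lemma sub_zero: "lsubspace W \<Longrightarrow> 0 \<in> W" unfolding lsubspace_def by blast
lemma sub_add: "lsubspace W \<Longrightarrow> x \<in> W \<Longrightarrow> y \<in> W \<Longrightarrow> x + y \<in> W" unfolding lsubspace_def by blast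
lemma sub_smult: "lsubspace W \<Longrightarrow> x \<in> W \<Longrightarrow> c *s x \<in> W" unfolding lsubspace_def by blast
lemma sub_neg:
  fixes x :: "'r::division_ring^'n"
  shows "lsubspace W \<Longrightarrow> x \<in> W \<Longrightarrow> - x \<in> W"
  using sub_smult[of W x "-1"] by (simp add: vector_sneg_minus1[symmetric])
lemma sub_diff:
  fixes x :: "'r::division_ring^'n"
  shows "lsubspace W \<Longrightarrow> x \<in> W \<Longrightarrow> y \<in> W \<Longrightarrow> x - y \<in> W"
  using sub_add[of W x "-y"] sub_neg[of W y] by simp
lemma sub_Int: "lsubspace U \<Longrightarrow> lsubspace W \<Longrightarrow> lsubspace (U \<inter> W)"
  unfolding lsubspace_def by blast

lemma coset_eq:
  fixes x :: "'r::division_ring^'n"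
  assumes W: "lsubspace W"
  shows "coset W x = coset W y \<longleftrightarrow> x - y \<in> W"
proof
  assume "coset W x = coset W y"
  then have "x + 0 \<in> coset W y" using sub_zero[OF W] unfolding coset_def by blast
  then obtain w where "w \<in> W" "x = y + w" unfolding coset_def by auto
  then show "x - y \<in> W" by (simp add: algebra_simps)
next
  assume d: "x - y \<in> W"
  have "coset W x \<subseteq> coset W y" if "x - y \<in> W" for x y
  proof
    fix u assume "u \<in> coset W x"
    then obtain w where w: "w \<in> W" "u = x + w" unfolding coset_def by auto
    then have "u = y + ((x - y) + w)" by (simp add: algebra_simps)
    moreover have "(x - y) + w \<in> W" using sub_add[OF W that w(1)] .
    ultimately show "u \<in> coset W y" unfolding coset_def by blast
  qed
  moreover have "y - x \<in> W" using sub_neg[OF W d] by simp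
  ultimately show "coset W x = coset W y" using d by blast
qed

definition gen3 :: "(nat \<Rightarrow> ('r::division_ring ^ 'n::finite) set) \<Rightarrow> (nat \<Rightarrow> ('r ^ 'n) set) \<Rightarrow> (nat \<Rightarrow> ('r ^ 'n) set) \<Rightarrow> bool" where
  "gen3 A B C \<longleftrightarrow> is_flag A \<and> is_flag B \<and> is_flag C \<and>
     (\<forall>a b c. a + b + c = CARD('n) \<longrightarrow> (\<forall>x. x \<in> A a \<longrightarrow> x \<in> B b \<longrightarrow> x \<in> C c \<longrightarrow> x = 0)) \<and>
     (\<forall>a b c. a + b + c = CARD('n) \<longrightarrow> (\<forall>x y z. \<exists>v. v - x \<in> A a \<and> v - y \<in> B b \<and> v - z \<in> C c))"

lemma gen3_rot: "gen3 A B C \<Longrightarrow> gen3 B C A"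
  unfolding gen3_def
proof (elim conjE, intro conjI allI impI)
  fix a b c x
  assume H: "\<forall>a b c. a + b + c = CARD('b) \<longrightarrow> (\<forall>x. x \<in> A a \<longrightarrow> x \<in> B b \<longrightarrow> x \<in> C c \<longrightarrow> x = 0)"
    and s: "a + b + c = CARD('b)" and x: "x \<in> B a" "x \<in> C b" "x \<in> A c"
  have "c + a + b = CARD('b)" using s by simp
  then show "x = 0" using H x by blast
next
  fix a b c x y z
  assume H: "\<forall>a b c. a + b + c = CARD('b) \<longrightarrow> (\<forall>x y z. \<exists>v. v - x \<in> A a \<and> v - y \<in> B b \<and> v - z \<in> C c)"
    and s: "a + b + c = CARD('b)"
  have "c + a + b = CARD('b)" using s by simp
  then obtain v where "v - z \<in> A c \<and> v - x \<in> B a \<and> v - y \<in> C b" using H by blast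
  then show "\<exists>v. v - x \<in> B a \<and> v - y \<in> C b \<and> v - z \<in> A c" by blast
qed (assumption)+

lemma gen3I:
  fixes A B C :: "nat \<Rightarrow> ('r::division_ring ^ 'n::finite) set"
  assumes g: "generic_triple A B C" shows "gen3 A B C"
proof -
  have fl: "is_flag A" "is_flag B" "is_flag C" using g unfolding generic_triple_def by auto
  have bij: "bij_betw (\<lambda>v. (coset (A a) v, coset (B b) v, coset (C c) v)) UNIV
          (quot UNIV (A a) \<times> quot UNIV (B b) \<times> quot UNIV (C c))" if "a + b + c = CARD('n)" for a b c
  proof -
    have gall: "\<forall>a b c. a + b + c = CARD('n) \<longrightarrow>
        bij_betw (\<lambda>v. (coset (A a) v, coset (B b) v, coset (C c) v)) UNIV
          (quot UNIV (A a) \<times> quot UNIV (B b) \<times> quot UNIV (C c))"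
      using g unfolding generic_triple_def by (rule conjunct2[OF conjunct2[OF conjunct2]])
    show ?thesis using gall[rule_format, OF that] .
  qed
  have inj: "x = 0" if s: "a + b + c = CARD('n)" and x: "x \<in> A a" "x \<in> B b" "x \<in> C c" for a b c x
  proof -
    have le: "a \<le> CARD('n)" "b \<le> CARD('n)" "c \<le> CARD('n)" using s by auto
    have e1: "coset (A a) x = coset (A a) 0" using coset_eq[OF flag_sub[OF fl(1) le(1)]] x by simp
    have e2: "coset (B b) x = coset (B b) 0" using coset_eq[OF flag_sub[OF fl(2) le(2)]] x by simp
    have e3: "coset (C c) x = coset (C c) 0" using coset_eq[OF flag_sub[OF fl(3) le(3)]] x by simp
    have "(\<lambda>v. (coset (A a) v, coset (B b) v, coset (C c) v)) x = (\<lambda>v. (coset (A a) v, coset (B b) v, coset (C c) v)) 0"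
      using e1 e2 e3 by simp
    from inj_onD[OF bij_betw_imp_inj_on[OF bij[OF s]] this] show "x = 0" by simp
  qed
  have surj: "\<exists>v. v - x \<in> A a \<and> v - y \<in> B b \<and> v - z \<in> C c" if s: "a + b + c = CARD('n)" for a b c x y z
  proof -
    have le: "a \<le> CARD('n)" "b \<le> CARD('n)" "c \<le> CARD('n)" using s by auto
    have "(coset (A a) x, coset (B b) y, coset (C c) z) \<in> quot UNIV (A a) \<times> quot UNIV (B b) \<times> quot UNIV (C c)"
      unfolding quot_def by blast
    then have "(coset (A a) x, coset (B b) y, coset (C c) z) \<in> (\<lambda>v. (coset (A a) v, coset (B b) v, coset (C c) v)) ` UNIV"
      using bij_betw_imp_surj_on[OF bij[OF s]] by simp
    then obtain v where "(coset (A a) x, coset (B b) y, coset (C c) z) = (coset (A a) v, coset (B b) v, coset (C c) v)"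
      by blast
    then have "coset (A a) v = coset (A a) x" "coset (B b) v = coset (B b) y" "coset (C c) v = coset (C c) z"
      by simp_all
    then show ?thesis using coset_eq[OF flag_sub[OF fl(1) le(1)]] coset_eq[OF flag_sub[OF fl(2) le(2)]]
      coset_eq[OF flag_sub[OF fl(3) le(3)]] by blast
  qed
  show ?thesis unfolding gen3_def
  proof (intro conjI allI impI)
    fix a b c x assume "a + b + c = CARD('n)" "x \<in> A a" "x \<in> B b" "x \<in> C c"
    then show "x = 0" by (rule inj)
  next
    fix a b c x y z assume "a + b + c = CARD('n)"
    then show "\<exists>v. v - x \<in> A a \<and> v - y \<in> B b \<and> v - z \<in> C c" by (rule surj)
  qed (rule fl)+
qed

lemma line_bij:
  fixes A B C :: "nat \<Rightarrow> ('r::division_ring ^ 'n::finite) set"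
  assumes g: "gen3 A B C" and abc: "1 \<le> a" "1 \<le> b" "1 \<le> c" "a + b + c = CARD('n) + 2"
  shows "bij_betw (coset (A a)) (A (a - 1) \<inter> B (b - 1) \<inter> C (c - 1)) (gr A a)"
proof -
  have fl: "is_flag A" "is_flag B" "is_flag C" using g unfolding gen3_def by auto
  have s: "a + (b - 1) + (c - 1) = CARD('n)" using abc by simp
  have le: "a \<le> CARD('n)" using abc by simp
  have sa: "lsubspace (A a)" using flag_sub[OF fl(1) le] .
  have sb: "lsubspace (B (b-1))" using flag_sub[OF fl(2)] abc by simp
  have sc: "lsubspace (C (c-1))" using flag_sub[OF fl(3)] abc by simp
  have mono: "A a \<subseteq> A (a - 1)" using flag_mono[OF fl(1) _ le] by simp
  let ?L = "A (a - 1) \<inter> B (b - 1) \<inter> C (c - 1)"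
  have "inj_on (coset (A a)) ?L"
  proof (rule inj_onI)
    fix x y assume x: "x \<in> ?L" and y: "y \<in> ?L" and e: "coset (A a) x = coset (A a) y"
    have "x - y \<in> A a" using e coset_eq[OF sa] by blast
    moreover have "x - y \<in> B (b - 1)" using sub_diff[OF sb] x y by blast
    moreover have "x - y \<in> C (c - 1)" using sub_diff[OF sc] x y by blast
    ultimately have "x - y = 0" using g s unfolding gen3_def by blast
    then show "x = y" by simp
  qed
  moreover have "coset (A a) ` ?L = gr A a"
  proof
    show "coset (A a) ` ?L \<subseteq> gr A a" unfolding gr_def quot_def by blast
  next
    show "gr A a \<subseteq> coset (A a) ` ?L"
    proof
      fix X assume "X \<in> gr A a"
      then obtain u where u: "u \<in> A (a - 1)" "X = coset (A a) u" unfolding gr_def quot_def by blast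
      obtain v where v: "v - u \<in> A a" "v - 0 \<in> B (b - 1)" "v - 0 \<in> C (c - 1)"
        using g s unfolding gen3_def by blast
      have sa1: "lsubspace (A (a - 1))" using flag_sub[OF fl(1)] le by simp
      have "v - u \<in> A (a - 1)" using v(1) mono by blast
      from sub_add[OF sa1 u(1) this] have "u + (v - u) \<in> A (a - 1)" .
      then have "v \<in> A (a - 1)" by simp
      then have "v \<in> ?L" using v by simp
      moreover have "coset (A a) v = X" using u v(1) coset_eq[OF sa] by blast
      ultimately show "X \<in> coset (A a) ` ?L" by blast
    qed
  qed
  ultimately show ?thesis unfolding bij_betw_def by blast
qed

lemma can_same:
  assumes b: "bij_betw (coset (F i)) L (gr F i)" and l: "l \<in> L"
  shows "can_iso L F i G j (coset (F i) l) = coset (G j) l"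
proof -
  have "(THE l'. l' \<in> L \<and> coset (F i) l' = coset (F i) l) = l"
    using bij_betw_imp_inj_on[OF b] l by (intro the_equality) (auto simp: inj_on_def)
  then show ?thesis unfolding can_iso_def by simp
qed

lemma can_step:
  assumes b: "bij_betw (coset (F i)) L (gr F i)" and y: "y \<in> F (i - 1)"
  shows "\<exists>l\<in>L. coset (F i) l = coset (F i) y \<and> can_iso L F i G j (coset (F i) y) = coset (G j) l"
proof -
  have "coset (F i) y \<in> gr F i" using y unfolding gr_def quot_def by blast
  then obtain l where "l \<in> L" "coset (F i) l = coset (F i) y"
    using bij_betw_imp_surj_on[OF b] by (metis imageE)
  moreover have "can_iso L F i G j (coset (F i) l) = coset (G j) l" using can_same[OF b \<open>l \<in> L\<close>] .
  ultimately show ?thesis by auto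
qed




lemma lspanI: "finite T \<Longrightarrow> T \<subseteq> S \<Longrightarrow> y = (\<Sum>x\<in>T. f x *s x) \<Longrightarrow> y \<in> lspan S"
  unfolding lspan_def by blast

lemma line_dim:
  fixes A B C :: "nat \<Rightarrow> ('r::division_ring ^ 'n::finite) set"
  assumes g: "gen3 A B C" and abc: "1 \<le> a" "1 \<le> b" "1 \<le> c" "a + b + c = CARD('n) + 2"
  shows "lsubspace (A (a - 1) \<inter> B (b - 1) \<inter> C (c - 1)) \<and> ldim (A (a - 1) \<inter> B (b - 1) \<inter> C (c - 1)) = 1"
proof -
  let ?m = "CARD('n)"
  let ?L = "A (a - 1) \<inter> B (b - 1) \<inter> C (c - 1)"
  have fl: "is_flag A" "is_flag B" "is_flag C" using g unfolding gen3_def by auto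
  have le: "a \<le> ?m" using abc by simp
  have sa: "lsubspace (A a)" using flag_sub[OF fl(1) le] .
  have sa1: "lsubspace (A (a - 1))" using flag_sub[OF fl(1)] le by simp
  have sb: "lsubspace (B (b-1))" using flag_sub[OF fl(2)] abc by simp
  have sc: "lsubspace (C (c-1))" using flag_sub[OF fl(3)] abc by simp
  have sL: "lsubspace ?L" using sa1 sb sc sub_Int by blast
  have mono: "A a \<subseteq> A (a - 1)" using flag_mono[OF fl(1) _ le] by simp
  have bij: "bij_betw (coset (A a)) ?L (gr A a)" using line_bij[OF g abc] .
  have LA: "y = 0" if "y \<in> ?L" "y \<in> A a" for y
  proof -
    have z: "0 \<in> ?L" using sL sub_zero by blast
    have "coset (A a) y = coset (A a) 0" using coset_eq[OF sa] that by simp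
    from inj_onD[OF bij_betw_imp_inj_on[OF bij] this that(1) z] show ?thesis .
  qed
  have "A a \<noteq> A (a - 1)" using flag_ne[OF fl(1) _ le] abc by simp
  then obtain v where v: "v \<in> A (a - 1)" "v \<notin> A a" using mono by blast
  obtain w where w: "w \<in> ?L" "coset (A a) w = coset (A a) v"
    using can_step[OF bij v(1), of A 0] by blast
  have wv: "w - v \<in> A a" using w(2) coset_eq[OF sa] by blast
  have wA: "w \<notin> A a"
  proof
    assume "w \<in> A a"
    then have "w - (w - v) \<in> A a" using sub_diff[OF sa] wv by blast
    then show False using v by simp
  qed
  have w0: "w \<noteq> 0" using wA sub_zero[OF sa] by blast
  have line: "\<exists>c. y = c *s w" if y: "y \<in> ?L" for y
  proof (rule ccontr)
    assume ny: "\<nexists>c. y = c *s w"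
    obtain Ba where Ba: "lbasis (A a) Ba" "finite Ba" using basis_exists[OF sa] by blast
    have cBa: "card Ba = ?m - a" using ldim_basis[OF Ba(1)] flag_ldim[OF fl(1) le] by simp
    have spBa: "lspan Ba = A a" using Ba(1) unfolding lbasis_def by blast
    have i1: "lindep_free (insert w Ba)"
      using indep_insert[OF Ba(2) _] Ba(1) wA spBa unfolding lbasis_def by blast
    define Q where "Q = {c *s w + z | c z. z \<in> A a}"
    have sQ: "lsubspace Q" unfolding lsubspace_def
    proof (intro conjI ballI allI)
      have "0 = 0 *s w + 0" by simp
      then show "0 \<in> Q" unfolding Q_def using sub_zero[OF sa] by blast
    next
      fix x y assume "x \<in> Q" "y \<in> Q"
      then obtain c1 z1 c2 z2 where "x = c1 *s w + z1" "z1 \<in> A a" "y = c2 *s w + z2" "z2 \<in> A a"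
        unfolding Q_def by blast
      then have "x + y = (c1 + c2) *s w + (z1 + z2)" "z1 + z2 \<in> A a"
        using sub_add[OF sa] by (auto simp: vector_sadd_rdistrib algebra_simps)
      then show "x + y \<in> Q" unfolding Q_def by blast
    next
      fix d x assume "x \<in> Q"
      then obtain c1 z1 where "x = c1 *s w + z1" "z1 \<in> A a" unfolding Q_def by blast
      then have "d *s x = (d * c1) *s w + d *s z1" "d *s z1 \<in> A a"
        using sub_smult[OF sa] by (auto simp: vector_add_ldistrib vector_smult_assoc)
      then show "d *s x \<in> Q" unfolding Q_def by blast
    qed
    have "insert w Ba \<subseteq> Q"
    proof
      fix x assume "x \<in> insert w Ba"
      then show "x \<in> Q"
      proof
        assume "x = w"
        then have "x = 1 *s w + 0" by simp
        then show "x \<in> Q" unfolding Q_def using sub_zero[OF sa] by blast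
      next
        assume "x \<in> Ba"
        then have "x \<in> A a" using Ba(1) unfolding lbasis_def by blast
        moreover have "x = 0 *s w + x" by simp
        ultimately show "x \<in> Q" unfolding Q_def by blast
      qed
    qed
    then have spQ: "lspan (insert w Ba) \<subseteq> Q" using lspan_sub[OF sQ] by blast
    have yQ: "y \<notin> Q"
    proof
      assume "y \<in> Q"
      then obtain c1 z where z: "y = c1 *s w + z" "z \<in> A a" unfolding Q_def by blast
      have "z = y - c1 *s w" using z(1) by simp
      moreover have "c1 *s w \<in> ?L" using sub_smult[OF sL w(1)] .
      ultimately have "z \<in> ?L" using sub_diff[OF sL y] by simp
      then have "z = 0" using LA z(2) by blast
      then show False using ny z(1) by auto
    qed
    have i2: "lindep_free (insert y (insert w Ba))"
      using indep_insert[OF _ i1] Ba(2) spQ yQ by blast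
    have "insert y (insert w Ba) \<subseteq> A (a - 1)"
      using y w(1) Ba(1) mono unfolding lbasis_def by blast
    then have "card (insert y (insert w Ba)) \<le> ldim (A (a - 1))"
      using ldim_indep[OF sa1 _ i2] by blast
    also have "\<dots> = ?m - (a - 1)" using flag_ldim[OF fl(1)] le by simp
    finally have c1: "card (insert y (insert w Ba)) \<le> ?m - (a - 1)" .
    have wB: "w \<notin> Ba" using wA Ba(1) unfolding lbasis_def by blast
    have yB: "y \<notin> insert w Ba" using yQ \<open>insert w Ba \<subseteq> Q\<close> by blast
    have "card (insert y (insert w Ba)) = ?m - a + 2" using wB yB Ba(2) cBa by simp
    then show False using c1 le abc by simp
  qed
  have hb: "lbasis ?L {w}"
    unfolding lbasis_def
  proof (intro conjI)
    show "{w} \<subseteq> ?L" using w(1) by blast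
    show "lindep_free {w}" unfolding lindep_free_def
    proof (intro allI impI ballI)
      fix T f x assume T: "finite T \<and> T \<subseteq> {w} \<and> (\<Sum>x\<in>T. f x *s x) = 0" and x: "x \<in> T"
      then have "T = {w}" "x = w" by auto
      then have "f w *s w = 0" using T by simp
      show "f x = 0"
      proof (rule ccontr)
        assume "f x \<noteq> 0"
        then have "w = inverse (f w) *s (f w *s w)" using smult_inv_cancel[of "f w" w] \<open>x = w\<close> by simp
        then show False using \<open>f w *s w = 0\<close> w0 by simp
      qed
    qed
    show "lspan {w} = ?L"
    proof
      show "lspan {w} \<subseteq> ?L" by (rule lspan_sub[OF sL]) (use w(1) in blast)
    next
      show "?L \<subseteq> lspan {w}"
      proof
        fix y assume "y \<in> ?L"
        then obtain c1 where "y = c1 *s w" using line by blast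
        then show "y \<in> lspan {w}" by (intro lspanI[of "{w}" _ _ "\<lambda>_. c1"]) simp_all
      qed
    qed
  qed
  have "ldim ?L = 1" using ldim_basis[OF hb] by simp
  then show ?thesis using sL by blast
qed




theorem lemma2p3:
  fixes A B C :: "nat \<Rightarrow> ('r::division_ring ^ 'n::finite) set"
  assumes gen: "generic_triple A B C"
  shows
   "(\<forall>a b c. 1 \<le> a \<and> 1 \<le> b \<and> 1 \<le> c \<and> a + b + c = CARD('n) + 2 \<longrightarrow>
       lsubspace (tline A B C a b c) \<and> ldim (tline A B C a b c) = 1 \<and>
       bij_betw (coset (A a)) (tline A B C a b c) (gr A a) \<and>
       bij_betw (coset (B b)) (tline A B C a b c) (gr B b) \<and>
       bij_betw (coset (C c)) (tline A B C a b c) (gr C c))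
  \<and> (\<forall>a b c. 1 \<le> a \<and> 1 \<le> b \<and> 1 \<le> c \<and> a + b + c = CARD('n) + 2 \<longrightarrow>
       (\<forall>x\<in>A (a - 1).
          can_iso (tline A B C a b c) C c A a
            (can_iso (tline A B C a b c) B b C c
              (can_iso (tline A B C a b c) A a B b (coset (A a) x)))
          = coset (A a) x))
  \<and> (\<forall>a b c. 2 \<le> a \<and> 2 \<le> b \<and> 2 \<le> c \<and> a + b + c = CARD('n) + 4 \<longrightarrow>
       (\<forall>x\<in>A (a - 1).
          can_iso (tline A B C a (b - 1) (c - 1)) C (c - 1) A a
           (can_iso (tline A B C (a - 1) b (c - 1)) B b C (c - 1)
            (can_iso (tline A B C (a - 1) b (c - 1)) A (a - 1) B b
             (can_iso (tline A B C (a - 1) (b - 1) c) C c A (a - 1)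
              (can_iso (tline A B C (a - 1) (b - 1) c) B (b - 1) C c
               (can_iso (tline A B C a (b - 1) (c - 1)) A a B (b - 1) (coset (A a) x))))))
          = coset (A a) (- x)))"
proof -
  let ?m = "CARD('n)"
  have g: "gen3 A B C" using gen3I[OF gen] .
  have g2: "gen3 B C A" using gen3_rot[OF g] .
  have g3: "gen3 C A B" using gen3_rot[OF g2] .
  have fl: "is_flag A" "is_flag B" "is_flag C" using g unfolding gen3_def by auto
  have ginj: "x = 0" if "a + b + c = ?m" "x \<in> A a" "x \<in> B b" "x \<in> C c" for a b c x
    using g that unfolding gen3_def by blast
  have P1: "lsubspace (tline A B C a b c) \<and> ldim (tline A B C a b c) = 1 \<and>
       bij_betw (coset (A a)) (tline A B C a b c) (gr A a) \<and>
       bij_betw (coset (B b)) (tline A B C a b c) (gr B b) \<and>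
       bij_betw (coset (C c)) (tline A B C a b c) (gr C c)"
    if H: "1 \<le> a" "1 \<le> b" "1 \<le> c" "a + b + c = ?m + 2" for a b c
  proof -
    have e1: "tline A B C a b c = A (a - 1) \<inter> B (b - 1) \<inter> C (c - 1)" by (simp add: tline_def)
    have e2: "tline A B C a b c = B (b - 1) \<inter> C (c - 1) \<inter> A (a - 1)" by (auto simp: tline_def)
    have e3: "tline A B C a b c = C (c - 1) \<inter> A (a - 1) \<inter> B (b - 1)" by (auto simp: tline_def)
    have s2: "b + c + a = ?m + 2" "c + a + b = ?m + 2" using H by simp_all
    show ?thesis
      using line_dim[OF g H] line_bij[OF g H] line_bij[OF g2 H(2,3,1) s2(1)]
        line_bij[OF g3 H(3,1,2) s2(2)] e1 e2 e3 by simp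
  qed
  have P2: "can_iso (tline A B C a b c) C c A a
            (can_iso (tline A B C a b c) B b C c
              (can_iso (tline A B C a b c) A a B b (coset (A a) x)))
          = coset (A a) x"
    if H: "1 \<le> a" "1 \<le> b" "1 \<le> c" "a + b + c = ?m + 2" and x: "x \<in> A (a - 1)" for a b c x
  proof -
    have bs: "bij_betw (coset (A a)) (tline A B C a b c) (gr A a)"
       "bij_betw (coset (B b)) (tline A B C a b c) (gr B b)"
       "bij_betw (coset (C c)) (tline A B C a b c) (gr C c)" using P1[OF H] by auto
    obtain l where l: "l \<in> tline A B C a b c" "coset (A a) l = coset (A a) x"
      "can_iso (tline A B C a b c) A a B b (coset (A a) x) = coset (B b) l"
      using can_step[OF bs(1) x] by blast
    show ?thesis using l can_same[OF bs(2) l(1)] can_same[OF bs(3) l(1)] by simp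
  qed
  have P3: "can_iso (tline A B C a (b - 1) (c - 1)) C (c - 1) A a
           (can_iso (tline A B C (a - 1) b (c - 1)) B b C (c - 1)
            (can_iso (tline A B C (a - 1) b (c - 1)) A (a - 1) B b
             (can_iso (tline A B C (a - 1) (b - 1) c) C c A (a - 1)
              (can_iso (tline A B C (a - 1) (b - 1) c) B (b - 1) C c
               (can_iso (tline A B C a (b - 1) (c - 1)) A a B (b - 1) (coset (A a) x))))))
          = coset (A a) (- x)"
    if H: "2 \<le> a" "2 \<le> b" "2 \<le> c" "a + b + c = ?m + 4" and x0: "x \<in> A (a - 1)" for a b c x
  proof -
    obtain p where pa: "a = Suc (Suc p)" using H(1) by (metis add_2_eq_Suc le_Suc_ex)
    obtain q where qb: "b = Suc (Suc q)" using H(2) by (metis add_2_eq_Suc le_Suc_ex)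
    obtain r where rc: "c = Suc (Suc r)" using H(3) by (metis add_2_eq_Suc le_Suc_ex)
    have sm: "p + q + r + 2 = ?m" using H(4) pa qb rc by simp
    have x: "x \<in> A (Suc p)" using x0 pa by simp
    define L1 where "L1 = tline A B C (Suc (Suc p)) (Suc q) (Suc r)"
    define L2 where "L2 = tline A B C (Suc p) (Suc q) (Suc (Suc r))"
    define L3 where "L3 = tline A B C (Suc p) (Suc (Suc q)) (Suc r)"
    have L1e: "L1 = A (Suc p) \<inter> B q \<inter> C r" by (simp add: L1_def tline_def)
    have L2e: "L2 = A p \<inter> B q \<inter> C (Suc r)" by (simp add: L2_def tline_def)
    have L3e: "L3 = A p \<inter> B (Suc q) \<inter> C r" by (simp add: L3_def tline_def)
    have Q1: "lsubspace L1 \<and> ldim L1 = 1 \<and> bij_betw (coset (A (Suc (Suc p)))) L1 (gr A (Suc (Suc p))) \<and>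
       bij_betw (coset (B (Suc q))) L1 (gr B (Suc q)) \<and> bij_betw (coset (C (Suc r))) L1 (gr C (Suc r))"
      unfolding L1_def by (rule P1) (use sm in auto)
    have Q2: "lsubspace L2 \<and> ldim L2 = 1 \<and> bij_betw (coset (A (Suc p))) L2 (gr A (Suc p)) \<and>
       bij_betw (coset (B (Suc q))) L2 (gr B (Suc q)) \<and> bij_betw (coset (C (Suc (Suc r)))) L2 (gr C (Suc (Suc r)))"
      unfolding L2_def by (rule P1) (use sm in auto)
    have Q3: "lsubspace L3 \<and> ldim L3 = 1 \<and> bij_betw (coset (A (Suc p))) L3 (gr A (Suc p)) \<and>
       bij_betw (coset (B (Suc (Suc q)))) L3 (gr B (Suc (Suc q))) \<and> bij_betw (coset (C (Suc r))) L3 (gr C (Suc r))"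
      unfolding L3_def by (rule P1) (use sm in auto)
    have subA: "lsubspace (A i)" if "i \<le> ?m" for i using flag_sub[OF fl(1) that] .
    have subB: "lsubspace (B i)" if "i \<le> ?m" for i using flag_sub[OF fl(2) that] .
    have subC: "lsubspace (C i)" if "i \<le> ?m" for i using flag_sub[OF fl(3) that] .
    have x': "x \<in> A (Suc (Suc p) - 1)" using x by simp
    obtain l1 where l1: "l1 \<in> L1" "coset (A (Suc (Suc p))) l1 = coset (A (Suc (Suc p))) x"
      "can_iso L1 A (Suc (Suc p)) B (Suc q) (coset (A (Suc (Suc p))) x) = coset (B (Suc q)) l1"
      using can_step[OF conjunct1[OF conjunct2[OF conjunct2[OF Q1]]] x'] by blast
    have l1': "l1 \<in> B (Suc q - 1)" using l1(1) L1e by simp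
    obtain l2 where l2: "l2 \<in> L2" "coset (B (Suc q)) l2 = coset (B (Suc q)) l1"
      "can_iso L2 B (Suc q) C (Suc (Suc r)) (coset (B (Suc q)) l1) = coset (C (Suc (Suc r))) l2"
      using can_step[OF conjunct1[OF conjunct2[OF conjunct2[OF conjunct2[OF Q2]]]] l1'] by blast
    have s3: "can_iso L2 C (Suc (Suc r)) A (Suc p) (coset (C (Suc (Suc r))) l2) = coset (A (Suc p)) l2"
      using can_same[OF conjunct2[OF conjunct2[OF conjunct2[OF conjunct2[OF Q2]]]] l2(1)] .
    have l2': "l2 \<in> A (Suc p - 1)" using l2(1) L2e by simp
    obtain l3 where l3: "l3 \<in> L3" "coset (A (Suc p)) l3 = coset (A (Suc p)) l2"
      "can_iso L3 A (Suc p) B (Suc (Suc q)) (coset (A (Suc p)) l2) = coset (B (Suc (Suc q))) l3"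
      using can_step[OF conjunct1[OF conjunct2[OF conjunct2[OF Q3]]] l2'] by blast
    have s5: "can_iso L3 B (Suc (Suc q)) C (Suc r) (coset (B (Suc (Suc q))) l3) = coset (C (Suc r)) l3"
      using can_same[OF conjunct1[OF conjunct2[OF conjunct2[OF conjunct2[OF Q3]]]] l3(1)] .
    have l3': "l3 \<in> C (Suc r - 1)" using l3(1) L3e by simp
    obtain l4 where l4: "l4 \<in> L1" "coset (C (Suc r)) l4 = coset (C (Suc r)) l3"
      "can_iso L1 C (Suc r) A (Suc (Suc p)) (coset (C (Suc r)) l3) = coset (A (Suc (Suc p))) l4"
      using can_step[OF conjunct2[OF conjunct2[OF conjunct2[OF conjunct2[OF Q1]]]] l3'] by blast
    have d1x: "l1 - x \<in> A (Suc (Suc p))" using l1(2) coset_eq[OF subA] sm by simp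
    have d12: "l1 - l2 \<in> B (Suc q)" using l2(2) coset_eq[OF subB, of "Suc q" l1 l2] sm by simp
    have d23: "l3 - l2 \<in> A (Suc p)" using l3(2) coset_eq[OF subA] sm by simp
    have d34: "l4 - l3 \<in> C (Suc r)" using l4(2) coset_eq[OF subC] sm by simp
    have sAp: "lsubspace (A (Suc p))" "lsubspace (A p)" using subA sm by simp_all
    have sBq: "lsubspace (B (Suc q))" "lsubspace (B q)" using subB sm by simp_all
    have sCr: "lsubspace (C (Suc r))" "lsubspace (C r)" using subC sm by simp_all
    have mC: "C (Suc r) \<subseteq> C r" using flag_mono[OF fl(3), of r "Suc r"] sm by simp
    define e where "e = l1 + l3 - l2"
    have eA: "e \<in> A (Suc p)"
    proof -
      have "e = l1 + (l3 - l2)" unfolding e_def by simp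
      then show ?thesis using sub_add[OF sAp(1)] l1(1) L1e d23 by simp
    qed
    have eB: "e \<in> B (Suc q)"
    proof -
      have "e = l3 + (l1 - l2)" unfolding e_def by (simp add: algebra_simps)
      then show ?thesis using sub_add[OF sBq(1)] l3(1) L3e d12 by simp
    qed
    have eC: "e \<in> C r"
    proof -
      have "l1 + l3 \<in> C r" using sub_add[OF sCr(2)] l1(1) l3(1) L1e L3e by simp
      moreover have "l2 \<in> C r" using l2(1) L2e mC by blast
      ultimately show ?thesis unfolding e_def using sub_diff[OF sCr(2)] by blast
    qed
    have "e = 0" using ginj[of "Suc p" "Suc q" r e] sm eA eB eC by simp
    then have l3e: "l3 = l2 - l1" unfolding e_def by (simp add: algebra_simps)
    define f where "f = l4 + l1"
    have fA: "f \<in> A (Suc p)" unfolding f_def using sub_add[OF sAp(1)] l1(1) l4(1) L1e by simp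
    have fB: "f \<in> B q" unfolding f_def using sub_add[OF sBq(2)] l1(1) l4(1) L1e by simp
    have fC: "f \<in> C (Suc r)"
    proof -
      have "f = (l4 - l3) + l2" unfolding f_def l3e by (simp add: algebra_simps)
      then show ?thesis using sub_add[OF sCr(1)] d34 l2(1) L2e by simp
    qed
    have "f = 0" using ginj[of "Suc p" q "Suc r" f] sm fA fB fC by simp
    then have l4e: "l4 = - l1" unfolding f_def by (simp add: add_eq_0_iff)
    have "l4 - (- x) \<in> A (Suc (Suc p))"
      using sub_neg[OF subA d1x] sm l4e by (simp add: algebra_simps)
    then have fin: "coset (A (Suc (Suc p))) l4 = coset (A (Suc (Suc p))) (- x)"
      using coset_eq[OF subA] sm by simp
    have "can_iso L1 C (Suc r) A (Suc (Suc p))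
           (can_iso L3 B (Suc (Suc q)) C (Suc r)
            (can_iso L3 A (Suc p) B (Suc (Suc q))
             (can_iso L2 C (Suc (Suc r)) A (Suc p)
              (can_iso L2 B (Suc q) C (Suc (Suc r))
               (can_iso L1 A (Suc (Suc p)) B (Suc q) (coset (A (Suc (Suc p))) x))))))
          = coset (A (Suc (Suc p))) (- x)"
      using l1(3) l2(3) s3 l3(3) s5 l4(3) fin by simp
    then show ?thesis unfolding L1_def L2_def L3_def pa qb rc by simp
  qed
  show ?thesis using P1 P2 P3 by blast
qed


end
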